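(* Let $c$ be a minimal-cellular cubic coordinate of size $n$ and let $i\in[n-1]$. If $c'=\uparrow_{i+1}(\uparrow_{i+2}(\cdots(\uparrow_{n-1}(c))\cdots))$ is well-defined (for $i=n-1$ this is $c'=c$), then $\uparrow_i(c')$ is well-defined.
   Context: A Tamari diagram of size $n$ is a word $u=u_1\cdots u_n$ of integers with $0\leq u_i\leq n-i$ and $u_{i+j}\leq u_i-j$ for all $i\in[n]$, $0\leq j\leq u_i$. A dual Tamari diagram of size $n$ is a word $v$ of integers with $0\leq v_i\leq i-1$ and $v_{i-j}\leq v_i-j$ for all $i\in[n]$, $0\leq j\leq v_i$. $(u,v)$ is a Tamari interval diagram if moreover for all $1\leq i<j\leq n$ with $j-i\leq u_i$ one has $v_j<j-i$. A cubic coordinate of size $n$ is $c\in\mathbb{Z}^{n-1}$ such that $(u,v)$ with $u_i=\max(c_i,0)$ ($i\in[n-1]$), $u_n=0$, $v_1=0$, $v_i=|\min(c_{i-1},0)|$ ($2\leq i\leq n$) is a Tamari interval diagram. For a cubic coordinate $c$ and $i\in[n-1]$, the minimal increase $\uparrow_i(c)$ is well-defined when there exists a cubic coordinate agreeing with $c$ outside position $i$ and with $i$-th entry $>c_i$; then $\uparrow_i(c)$ is obtained from $c$ by replacing $c_i$ by the smallest integer $t>c_i$ such that the result is a cubic coordinate (equivalently, it covers $c$ in the componentwise order and differs from $c$ only at position $i$). $c$ is minimal-cellular if $\uparrow_i(c)$ is well-defined for every $i\in[n-1]$. *)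

theory Defs
  imports Main
begin

(* Words are functions nat => int, read 1-indexed on positions 1..n. *)

definition tamari_diagram :: "nat \<Rightarrow> (nat \<Rightarrow> int) \<Rightarrow> bool" where
  "tamari_diagram n u \<longleftrightarrow>
     (\<forall>i\<in>{1..n}. 0 \<le> u i \<and> u i \<le> int n - int i) \<and>
     (\<forall>i\<in>{1..n}. \<forall>j::nat. int j \<le> u i \<longrightarrow> u (i + j) \<le> u i - int j)"

definition dual_tamari_diagram :: "nat \<Rightarrow> (nat \<Rightarrow> int) \<Rightarrow> bool" where
  "dual_tamari_diagram n v \<longleftrightarrow>
     (\<forall>i\<in>{1..n}. 0 \<le> v i \<and> v i \<le> int i - 1) \<and>
     (\<forall>i\<in>{1..n}. \<forall>j::nat. int j \<le> v i \<longrightarrow> v (i - j) \<le> v i - int j)"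

definition tamari_interval_diagram :: "nat \<Rightarrow> (nat \<Rightarrow> int) \<Rightarrow> (nat \<Rightarrow> int) \<Rightarrow> bool" where
  "tamari_interval_diagram n u v \<longleftrightarrow>
     tamari_diagram n u \<and> dual_tamari_diagram n v \<and>
     (\<forall>i j. 1 \<le> i \<and> i < j \<and> j \<le> n \<and> int (j - i) \<le> u i \<longrightarrow> v j < int (j - i))"

(* A cubic coordinate c = (c_1,...,c_{n-1}) is stored as a list; c_k = c ! (k - 1). *)
definition u_of :: "nat \<Rightarrow> int list \<Rightarrow> nat \<Rightarrow> int" where
  "u_of n c i = (if 1 \<le> i \<and> i \<le> n - 1 then max (c ! (i - 1)) 0 else 0)"

definition v_of :: "nat \<Rightarrow> int list \<Rightarrow> nat \<Rightarrow> int" where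
  "v_of n c i = (if 2 \<le> i \<and> i \<le> n then \<bar>min (c ! (i - 2)) 0\<bar> else 0)"

definition cubic_coordinate :: "nat \<Rightarrow> int list \<Rightarrow> bool" where
  "cubic_coordinate n c \<longleftrightarrow> 1 \<le> n \<and> length c = n - 1 \<and>
     tamari_interval_diagram n (u_of n c) (v_of n c)"

definition up_defined :: "nat \<Rightarrow> int list \<Rightarrow> nat \<Rightarrow> bool" where
  "up_defined n c i \<longleftrightarrow> (\<exists>t. t > c ! (i - 1) \<and> cubic_coordinate n (c[i - 1 := t]))"

definition up :: "nat \<Rightarrow> int list \<Rightarrow> nat \<Rightarrow> int list" where
  "up n c i = c[i - 1 := (LEAST t. t > c ! (i - 1) \<and> cubic_coordinate n (c[i - 1 := t]))]"

definition up_opt :: "nat \<Rightarrow> int list \<Rightarrow> nat \<Rightarrow> int list option" where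
  "up_opt n c i = (if up_defined n c i then Some (up n c i) else None)"

definition minimal_cellular :: "nat \<Rightarrow> int list \<Rightarrow> bool" where
  "minimal_cellular n c \<longleftrightarrow> cubic_coordinate n c \<and> (\<forall>i\<in>{1..n - 1}. up_defined n c i)"

(* up_chain n c i = \<up>_{i+1}(\<up>_{i+2}(...\<up>_{n-1}(c)...)): applies \<up>_{n-1} first;
   None if some step is not well-defined. For i = n-1 it is Some c. *)
definition up_chain :: "nat \<Rightarrow> int list \<Rightarrow> nat \<Rightarrow> int list option" where
  "up_chain n c i = fold (\<lambda>k oc. Option.bind oc (\<lambda>x. up_opt n x k)) (rev [i + 1..<n]) (Some c)"

end

theory Submission
  imports Defs
begin

lemma fold_None:
  "fold (\<lambda>k oc. Option.bind oc (\<lambda>x. up_opt n x k)) ks None = None"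
  by (induction ks) auto

lemma int_least_ex:
  fixes P :: "int \<Rightarrow> bool" and a :: int
  assumes "P y0" and "\<And>y. P y \<Longrightarrow> a \<le> y"
  shows "P (LEAST t. P t)"
proof -
  define Q where "Q m \<longleftrightarrow> P (a + int m)" for m :: nat
  have "Q (nat (y0 - a))" unfolding Q_def using assms by auto
  then have q: "Q (LEAST m. Q m)" by (rule LeastI)
  define z where "z = a + int (LEAST m. Q m)"
  have "P z" using q unfolding Q_def z_def .
  moreover have "\<And>y. P y \<Longrightarrow> z \<le> y"
  proof -
    fix y assume y: "P y"
    then have "Q (nat (y - a))" unfolding Q_def using assms(2)[OF y] by auto
    then have "(LEAST m. Q m) \<le> nat (y - a)" by (rule Least_le)
    then show "z \<le> y" unfolding z_def using assms(2)[OF y] by linarith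
  qed
  ultimately have "(LEAST t. P t) = z" by (rule Least_equality)
  then show ?thesis using \<open>P z\<close> by simp
qed

lemma up_step:
  assumes "up_defined n x k"
  shows "\<exists>t>x!(k-1). up n x k = x[k-1:=t] \<and> cubic_coordinate n (up n x k)"
proof -
  let ?P = "\<lambda>t. t > x ! (k - 1) \<and> cubic_coordinate n (x[k - 1 := t])"
  from assms obtain t where "?P t" unfolding up_defined_def by blast
  then have "?P (LEAST t. ?P t)" by (rule int_least_ex[where a = "x ! (k - 1)"]) auto
  then show ?thesis unfolding up_def by auto
qed

lemma chain_gen:
  "\<forall>k\<in>set ks. i < k \<Longrightarrow>
   fold (\<lambda>k oc. Option.bind oc (\<lambda>x. up_opt n x k)) ks (Some x) = Some y \<Longrightarrow>
   cubic_coordinate n x \<Longrightarrow>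
   cubic_coordinate n y \<and> length y = length x \<and> (\<forall>m<i. y!m = x!m) \<and> (\<forall>m<length x. x!m \<le> y!m)"
proof (induction ks arbitrary: x)
  case Nil
  then show ?case by auto
next
  case (Cons k ks)
  show ?case
  proof (cases "up_defined n x k")
    case False
    then show ?thesis using Cons.prems fold_None[of n ks] by (simp add: up_opt_def)
  next
    case True
    then obtain t where t: "t > x!(k-1)" "up n x k = x[k-1:=t]" "cubic_coordinate n (up n x k)"
      using up_step by blast
    have f: "fold (\<lambda>k oc. Option.bind oc (\<lambda>x. up_opt n x k)) ks (Some (up n x k)) = Some y"
      using Cons.prems True by (simp add: up_opt_def)
    have ik: "i < k" using Cons.prems by auto
    from Cons.IH[OF _ f t(3)] Cons.prems
    have IH: "cubic_coordinate n y \<and> length y = length (up n x k) \<and> (\<forall>m<i. y!m = (up n x k)!m)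
       \<and> (\<forall>m<length (up n x k). (up n x k)!m \<le> y!m)" by auto
    have A: "\<forall>m<i. (up n x k)!m = x!m" using t(2) ik by (auto simp: nth_list_update)
    have B: "\<forall>m<length x. x!m \<le> (up n x k)!m"
    proof (intro allI impI)
      fix m assume "m < length x"
      then show "x!m \<le> (up n x k)!m" using t(1,2) by (cases "m = k - 1") (auto simp: nth_list_update)
    qed
    show ?thesis using IH A B t(2) by (auto intro: order_trans)
  qed
qed

lemma zero_lemma:
  assumes D: "tamari_interval_diagram n u v" and i: "1 \<le> i" "i \<le> n - 1"
  shows "tamari_interval_diagram n (u(i:=0)) (v(i+1:=0))"
proof -
  from D have T: "tamari_diagram n u" and Du: "dual_tamari_diagram n v"
    and I: "\<forall>a b. 1 \<le> a \<and> a < b \<and> b \<le> n \<and> int (b - a) \<le> u a \<longrightarrow> v b < int (b - a)"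
    unfolding tamari_interval_diagram_def by auto
  have "tamari_diagram n (u(i:=0))"
    using T unfolding tamari_diagram_def by auto
  moreover have "dual_tamari_diagram n (v(i+1:=0))"
    using Du unfolding dual_tamari_diagram_def by auto
  moreover have "\<forall>a b. 1 \<le> a \<and> a < b \<and> b \<le> n \<and> int (b - a) \<le> (u(i:=0)) a \<longrightarrow> (v(i+1:=0)) b < int (b - a)"
    using I by auto
  ultimately show ?thesis unfolding tamari_interval_diagram_def by blast
qed

lemma key:
  fixes n i :: nat and u' v' u0 v0 :: "nat \<Rightarrow> int" and t0 :: int
  assumes i: "1 \<le> i" "i \<le> n - 1"
  and D': "tamari_interval_diagram n u' v'"
  and D0: "tamari_interval_diagram n u0 v0"
  and lo: "\<forall>k<i. u0 k = u' k"
  and t0: "u0 i = t0" "1 \<le> t0"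
  and vle: "\<forall>j>i. v' j \<le> v0 j"
  shows "\<exists>T::nat. t0 \<le> int T \<and> tamari_interval_diagram n (u'(i := int T)) v'"
proof -
  from D' have T': "tamari_diagram n u'" and Du': "dual_tamari_diagram n v'"
    and I': "\<forall>a b. 1 \<le> a \<and> a < b \<and> b \<le> n \<and> int (b - a) \<le> u' a \<longrightarrow> v' b < int (b - a)"
    unfolding tamari_interval_diagram_def by auto
  from D0 have T0: "tamari_diagram n u0"
    and I0: "\<forall>a b. 1 \<le> a \<and> a < b \<and> b \<le> n \<and> int (b - a) \<le> u0 a \<longrightarrow> v0 b < int (b - a)"
    unfolding tamari_interval_diagram_def by auto
  have T'b: "\<And>k. k\<in>{1..n} \<Longrightarrow> 0 \<le> u' k \<and> u' k \<le> int n - int k"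
    and T'n: "\<And>k j. k\<in>{1..n} \<Longrightarrow> int j \<le> u' k \<Longrightarrow> u' (k + j) \<le> u' k - int j"
    using T' unfolding tamari_diagram_def by auto
  have T0b: "\<And>k. k\<in>{1..n} \<Longrightarrow> 0 \<le> u0 k \<and> u0 k \<le> int n - int k"
    and T0n: "\<And>k j. k\<in>{1..n} \<Longrightarrow> int j \<le> u0 k \<Longrightarrow> u0 (k + j) \<le> u0 k - int j"
    using T0 unfolding tamari_diagram_def by auto
  define e where "e = i + nat t0"
  have "u0 i \<le> int n - int i" using T0b[of i] i by auto
  then have "int (i + nat t0) \<le> int n" using t0 by simp
  then have en: "e \<le> n" unfolding e_def by linarith
  define cl where "cl f \<longleftrightarrow> e \<le> f \<and> (\<forall>k. i < k \<and> k \<le> f \<longrightarrow> int k + u' k \<le> int f)" for f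
  have cln: "cl n" unfolding cl_def
  proof (intro conjI allI impI)
    fix k assume "i < k \<and> k \<le> n"
    then have "k \<in> {1..n}" using i by auto
    from T'b[OF this] show "int k + u' k \<le> int n" by simp
  qed (rule en)
  define F where "F = (LEAST f. cl f)"
  have clF: "cl F" unfolding F_def using cln by (rule LeastI)
  have Fn: "F \<le> n" unfolding F_def using cln by (rule Least_le)
  have Fmin: "\<And>f. cl f \<Longrightarrow> F \<le> f" unfolding F_def by (rule Least_le)
  have eF: "e \<le> F" and clk: "\<And>k. i < k \<Longrightarrow> k \<le> F \<Longrightarrow> int k + u' k \<le> int F"
    using clF unfolding cl_def by auto
  define T where "T = F - i"
  have TF: "int T = int F - int i" using eF unfolding T_def e_def by auto
  have tT: "t0 \<le> int T" using TF eF t0 unfolding e_def by auto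
  let ?U = "u'(i := int T)"
  have outer: "int T \<le> u' k - int (i - k)" if k: "1 \<le> k" "k < i" "int (i - k) \<le> u' k" for k
  proof -
    have kn: "k \<in> {1..n}" using k i by auto
    have ku: "0 \<le> u' k" using T'b[OF kn] by simp
    have "u0 k = u' k" using lo k by auto
    then have "u0 (k + (i - k)) \<le> u0 k - int (i - k)"
      using T0n[OF kn, of "i - k"] k by auto
    then have "t0 \<le> u' k - int (i - k)" using k lo t0 by auto
    have c: "cl (k + nat (u' k))"
      unfolding cl_def
    proof
      show "e \<le> k + nat (u' k)" using \<open>t0 \<le> u' k - int (i - k)\<close> k unfolding e_def by auto
      show "\<forall>m. i < m \<and> m \<le> k + nat (u' k) \<longrightarrow> int m + u' m \<le> int (k + nat (u' k))"
      proof (intro allI impI)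
        fix m assume m: "i < m \<and> m \<le> k + nat (u' k)"
        have "u' (k + (m - k)) \<le> u' k - int (m - k)" using T'n[OF kn, of "m - k"] m ku by auto
        then show "int m + u' m \<le> int (k + nat (u' k))" using m k ku by auto
      qed
    qed
    show ?thesis using Fmin[OF c] TF ku k by auto
  qed
  have "tamari_diagram n ?U"
    unfolding tamari_diagram_def
  proof (intro conjI ballI allI impI)
    fix k assume k: "k \<in> {1..n}"
    show "0 \<le> ?U k" using T'b[OF k] by auto
    show "?U k \<le> int n - int k" using T'b[OF k] TF Fn by auto
  next
    fix k j assume k: "k \<in> {1..n}" and j: "int j \<le> ?U k"
    show "?U (k + j) \<le> ?U k - int j"
    proof (cases "k = i")
      case True
      show ?thesis
      proof (cases "j = 0")
        case False
        then have "u' (i + j) \<le> int F - int (i + j)" using clk[of "i + j"] j True TF by auto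
        then show ?thesis using True False TF by auto
      qed auto
    next
      case False
      show ?thesis
      proof (cases "k + j = i")
        case True
        then show ?thesis using outer[of k] False j k by auto
      next
        case False2: False
        then show ?thesis using T'n[OF k, of j] j False by auto
      qed
    qed
  qed
  moreover have "\<forall>a b. 1 \<le> a \<and> a < b \<and> b \<le> n \<and> int (b - a) \<le> ?U a \<longrightarrow> v' b < int (b - a)"
  proof (intro allI impI)
    fix a b assume ab: "1 \<le> a \<and> a < b \<and> b \<le> n \<and> int (b - a) \<le> ?U a"
    show "v' b < int (b - a)"
    proof (cases "a = i")
      case False
      then show ?thesis using I' ab by auto
    next
      case True
      then have bF: "b \<le> F" using ab TF by auto
      show ?thesis
      proof (cases "b \<le> e")
        case True
        then have "v0 b < int (b - i)" using I0 ab \<open>a = i\<close> t0 unfolding e_def by auto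
        then show ?thesis using vle ab \<open>a = i\<close> by force
      next
        case False
        have "\<not> cl (b - 1)" using Fmin[of "b - 1"] bF False by (metis Suc_le_eq ab diff_less le_trans less_irrefl nat_le_linear order.strict_trans1 zero_less_one)
        then obtain k where k: "i < k" "k \<le> b - 1" "int k + u' k > int (b - 1)"
          unfolding cl_def using False by auto
        have "v' b < int (b - k)" using I' k ab \<open>a = i\<close> i by auto
        then show ?thesis using k \<open>a = i\<close> ab by auto
      qed
    qed
  qed
  ultimately show ?thesis using Du' tT unfolding tamari_interval_diagram_def by blast
qed

theorem lemma4p3:
  fixes n i :: nat and c c' :: "int list"
  assumes "minimal_cellular n c"
    and "1 \<le> i" and "i \<le> n - 1"
    and "up_chain n c i = Some c'"
  shows "up_defined n c' i"
proof -
  have cc: "cubic_coordinate n c" and ud: "up_defined n c i"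
    using assms(1-3) unfolding minimal_cellular_def by auto
  obtain t0 where t0: "t0 > c!(i-1)" "cubic_coordinate n (c[i-1:=t0])"
    using ud unfolding up_defined_def by blast
  have len: "length c = n - 1" and n1: "1 \<le> n" using cc unfolding cubic_coordinate_def by auto
  have ch: "cubic_coordinate n c' \<and> length c' = length c \<and> (\<forall>m<i. c'!m = c!m) \<and> (\<forall>m<length c. c!m \<le> c'!m)"
    using chain_gen[of "rev [i + 1..<n]" i n c c'] assms(4) cc unfolding up_chain_def by auto
  have cc': "cubic_coordinate n c'" and len': "length c' = n - 1"
    and same: "\<And>m. m < i \<Longrightarrow> c'!m = c!m" and mono: "\<And>m. m < n - 1 \<Longrightarrow> c!m \<le> c'!m"
    using ch len by auto
  have ci: "c'!(i-1) = c!(i-1)" using same assms(2) by auto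
  have D': "tamari_interval_diagram n (u_of n c') (v_of n c')" using cc' unfolding cubic_coordinate_def by auto
  have uupd: "\<And>x t. length x = n - 1 \<Longrightarrow> 0 \<le> t \<Longrightarrow> u_of n (x[i-1:=t]) = (u_of n x)(i := t)"
    using assms(2,3) by (auto simp: u_of_def fun_eq_iff nth_list_update)
  show ?thesis
  proof (cases "c!(i-1) < 0")
    case True
    have "v_of n (c'[i-1:=0]) = (v_of n c')(i+1 := 0)"
      using assms(2,3) len' by (auto simp: v_of_def fun_eq_iff nth_list_update)
    then have "cubic_coordinate n (c'[i-1:=0])"
      using zero_lemma[OF D' assms(2,3)] uupd[of c' 0] len' n1 unfolding cubic_coordinate_def by auto
    then show ?thesis unfolding up_defined_def using True ci by auto
  next
    case False
    let ?c0 = "c[i-1:=t0]"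
    have D0: "tamari_interval_diagram n (u_of n ?c0) (v_of n ?c0)" using t0 unfolding cubic_coordinate_def by auto
    have lo: "\<forall>k<i. u_of n ?c0 k = u_of n c' k"
      using same assms(2,3) by (auto simp: u_of_def nth_list_update)
    have tt: "u_of n ?c0 i = t0" "1 \<le> t0" using False t0 assms(2,3) len by (auto simp: u_of_def)
    have vle: "\<forall>j>i. v_of n c' j \<le> v_of n ?c0 j"
    proof (intro allI impI)
      fix j assume j: "i < j"
      show "v_of n c' j \<le> v_of n ?c0 j"
      proof (cases "j = i + 1")
        case True
        then show ?thesis using False ci by (auto simp: v_of_def)
      next
        case False
        then have "j - 2 \<noteq> i - 1" using j assms(2) by auto
        moreover have "2 \<le> j \<Longrightarrow> j \<le> n \<Longrightarrow> c!(j-2) \<le> c'!(j-2)" using mono by auto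
        ultimately show ?thesis by (auto simp: v_of_def nth_list_update)
      qed
    qed
    obtain T :: nat where T: "t0 \<le> int T" "tamari_interval_diagram n ((u_of n c')(i := int T)) (v_of n c')"
      using key[OF assms(2,3) D' D0 lo tt vle] by blast
    have "v_of n (c'[i-1:=int T]) = v_of n c'"
      using assms(2,3) len' False ci by (auto simp: v_of_def fun_eq_iff nth_list_update)
    then have "cubic_coordinate n (c'[i-1:=int T])"
      using T uupd[of c' "int T"] len' n1 unfolding cubic_coordinate_def by auto
    moreover have "int T > c'!(i-1)" using T t0 ci by auto
    ultimately show ?thesis unfolding up_defined_def by blast
  qed
qed

end
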